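(* Let $\mathcal{H}$ be a real Hilbert space, $T\ge1$ an integer (known to the player), $G>0$, $\mathcal{G}=\{g\in\mathcal{H}:\|g\|\le G\}$, $\epsilon>0$, and $a>G^2\pi/2$. Consider the strategy that, for $t=0,\dots,T-1$, plays \[ w_{t+1}=\epsilon\,\hat\theta_t\,\frac{\exp\Big(\frac{(\|\theta_t\|+G)^2}{2aT-\pi G^2(T-t-1)}\Big)-\exp\Big(\frac{(\|\theta_t\|-G)^2}{2aT-\pi G^2(T-t-1)}\Big)}{2G\sqrt{1-\frac{\pi G^2(T-t-1)}{2aT}}}. \] Then for any sequence of linear costs $g_1,\dots,g_T\in\mathcal{G}$ and any $u\in\mathcal{H}$, \[ \operatorname{Regret}(u)\ \le\ \|u\|\sqrt{2aT\log\Big(\frac{\sqrt{aT}\,\|u\|}{\epsilon}+1\Big)}+\epsilon\Big(\Big(1-\frac{\pi G^2}{2a}\Big)^{-1/2}-1\Big). \]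
   Context: Online linear optimization: on rounds $t=1,\dots,T$ the player chooses $w_t\in\mathcal{H}$, the adversary chooses $g_t\in\mathcal{G}$, the player suffers loss $\langle w_t,g_t\rangle$. $\theta_t=-\sum_{s=1}^t g_s$ ($\theta_0=0$); $\hat\theta=\theta/\|\theta\|$ if $\theta\ne0$ and $\hat\theta=0$ otherwise. $\operatorname{Regret}(u)=\sum_{t=1}^T\langle g_t,w_t-u\rangle$. *)

theory Defs
  imports "HOL-Analysis.Analysis"
begin

text \<open>Online linear optimization. Costs g_1,...,g_T are given as g :: nat => 'a (indices 1..T).\<close>

definition theta :: "(nat \<Rightarrow> 'a::real_inner) \<Rightarrow> nat \<Rightarrow> 'a" where
  "theta g t = - (\<Sum>s=1..t. g s)"

definition hat :: "'a::real_normed_vector \<Rightarrow> 'a" where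
  "hat x = (if x \<noteq> 0 then x /\<^sub>R norm x else 0)"

text \<open>The strategy: w_{t+1} is computed from theta_t, for t = 0..T-1.\<close>
definition kt_play ::
  "real \<Rightarrow> real \<Rightarrow> real \<Rightarrow> nat \<Rightarrow> (nat \<Rightarrow> 'a::real_inner) \<Rightarrow> nat \<Rightarrow> 'a" where
  "kt_play eps G a T g t =
     (let th = theta g t; D = 2 * a * real T - pi * G\<^sup>2 * (real T - real t - 1) in
      (eps * (exp ((norm th + G)\<^sup>2 / D) - exp ((norm th - G)\<^sup>2 / D))
         / (2 * G * sqrt (1 - pi * G\<^sup>2 * (real T - real t - 1) / (2 * a * real T))))
      *\<^sub>R hat th)"

definition regret :: "nat \<Rightarrow> (nat \<Rightarrow> 'a::real_inner) \<Rightarrow> (nat \<Rightarrow> 'a) \<Rightarrow> 'a \<Rightarrow> real" where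
  "regret T w g u = (\<Sum>t=1..T. inner (g t) (w t - u))"

end

theory Submission
  imports Defs "HOL-Probability.Hoeffding"
begin


lemma conj_bound:
  fixes x U \<alpha> \<beta> :: real
  assumes x: "x \<ge> 0" and U: "U \<ge> 0" and al: "\<alpha> > 0" and be: "\<beta> > 0"
  shows "x * U - \<beta> * exp (x\<^sup>2 / (2 * \<alpha>)) \<le> U * sqrt (2 * \<alpha> * ln (sqrt \<alpha> * U / \<beta> + 1)) - \<beta>"
proof -
  define c where "c = sqrt \<alpha> * U / \<beta> + 1"
  have c1: "c \<ge> 1" using U al be by (simp add: c_def)
  define L where "L = sqrt (2 * \<alpha> * ln c)"
  have lnc: "ln c \<ge> 0" using c1 by simp
  have L0: "L \<ge> 0" unfolding L_def using lnc al by simp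
  have L2: "L\<^sup>2 = 2 * \<alpha> * ln c" unfolding L_def using lnc al by simp
  have eL: "exp (L\<^sup>2 / (2 * \<alpha>)) = c" using L2 al c1 by simp
  have goal: "x * U - \<beta> * exp (x\<^sup>2 / (2 * \<alpha>)) \<le> U * L - \<beta>"
  proof (cases "x \<le> L")
    case True
    have "x * U \<le> L * U" using True U by (simp add: mult_right_mono)
    moreover have "exp (x\<^sup>2 / (2 * \<alpha>)) \<ge> 1" using al by simp
    ultimately show ?thesis using be by (smt (verit, best) mult_le_cancel_left1 mult.commute)
  next
    case False
    define s where "s = x - L"
    have s: "s > 0" using False s_def by simp
    have d: "x\<^sup>2 - L\<^sup>2 \<ge> s\<^sup>2" using L0 s unfolding s_def by (simp add: power2_eq_square algebra_simps mult_left_mono)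
    have "exp (x\<^sup>2 / (2 * \<alpha>)) = exp (L\<^sup>2 / (2 * \<alpha>)) * exp ((x\<^sup>2 - L\<^sup>2) / (2 * \<alpha>))"
      by (simp add: exp_add[symmetric] diff_divide_distrib)
    also have "\<dots> \<ge> c * (1 + (x\<^sup>2 - L\<^sup>2) / (2 * \<alpha>))"
      unfolding eL using c1 exp_ge_add_one_self by (intro mult_left_mono) (auto simp: add.commute)
    finally have e1: "\<beta> * exp (x\<^sup>2 / (2 * \<alpha>)) \<ge> \<beta> * c * (1 + (x\<^sup>2 - L\<^sup>2) / (2 * \<alpha>))"
      using be by (simp add: mult.assoc)
    have e2: "\<beta> * c * (1 + (x\<^sup>2 - L\<^sup>2) / (2 * \<alpha>)) \<ge> (sqrt \<alpha> * U + \<beta>) * (1 + s\<^sup>2 / (2 * \<alpha>))"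
    proof -
      have "\<beta> * c = sqrt \<alpha> * U + \<beta>" using be by (simp add: c_def field_simps)
      moreover have "sqrt \<alpha> * U + \<beta> \<ge> 0" using U be al by simp
      moreover have "(1 + (x\<^sup>2 - L\<^sup>2) / (2 * \<alpha>)) \<ge> (1 + s\<^sup>2 / (2 * \<alpha>))"
        using d al by (simp add: divide_right_mono)
      ultimately show ?thesis by (simp add: mult_left_mono)
    qed
    have e3: "(sqrt \<alpha> * U + \<beta>) * (1 + s\<^sup>2 / (2 * \<alpha>)) \<ge> sqrt \<alpha> * U * (1 + s\<^sup>2 / (2 * \<alpha>)) + \<beta>"
    proof -
      have "\<beta> * (s\<^sup>2 / (2 * \<alpha>)) \<ge> 0" using be al by simp
      thus ?thesis by (simp add: algebra_simps add_divide_distrib)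
    qed
    have e4: "sqrt \<alpha> * (1 + s\<^sup>2 / (2 * \<alpha>)) \<ge> s"
    proof -
      define r where "r = sqrt \<alpha>"
      have r: "r > 0" "\<alpha> = r\<^sup>2" using al by (auto simp: r_def)
      have "(s - r)\<^sup>2 / (2 * r) + r / 2 \<ge> 0" using r by simp
      moreover have "r * (1 + s\<^sup>2 / (2 * r\<^sup>2)) - s = (s - r)\<^sup>2 / (2 * r) + r / 2" using r
        by (simp add: field_simps power2_eq_square)
      ultimately have "r * (1 + s\<^sup>2 / (2 * r\<^sup>2)) \<ge> s" by linarith
      moreover have "sqrt \<alpha> * (1 + s\<^sup>2 / (2 * \<alpha>)) = r * (1 + s\<^sup>2 / (2 * r\<^sup>2))"
        unfolding r_def using al by simp
      ultimately show ?thesis by simp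
    qed
    hence e5: "sqrt \<alpha> * U * (1 + s\<^sup>2 / (2 * \<alpha>)) \<ge> s * U" using U
      by (metis mult.commute mult.left_commute mult_right_mono)
    have "\<beta> * exp (x\<^sup>2 / (2 * \<alpha>)) \<ge> s * U + \<beta>" using e1 e2 e3 e5 by linarith
    thus ?thesis unfolding s_def by (simp add: algebra_simps)
  qed
  thus ?thesis unfolding L_def c_def by simp
qed



lemma step_hilbert:
  fixes \<theta> g :: "'a::real_inner" and K D G :: real
  assumes K: "K > 0" and D: "D > 0" and G: "G > 0" and ng: "norm g \<le> G"
  shows "inner g (((K * exp ((norm \<theta> + G)\<^sup>2 / D) - K * exp ((norm \<theta> - G)\<^sup>2 / D)) / (2*G)) *\<^sub>R hat \<theta>)
      + K * exp ((norm (\<theta> - g))\<^sup>2 / D)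
    \<le> (K * exp ((norm \<theta> + G)\<^sup>2 / D) + K * exp ((norm \<theta> - G)\<^sup>2 / D)) / 2"
proof -
  define x where "x = norm \<theta>"
  define \<gamma> where "\<gamma> = inner g (hat \<theta>)"
  define A where "A = (x + G)\<^sup>2 / D"
  define B where "B = (x - G)\<^sup>2 / D"
  have nh: "norm (hat \<theta>) \<le> 1" by (simp add: hat_def)
  have "\<bar>\<gamma>\<bar> \<le> norm g * norm (hat \<theta>)" unfolding \<gamma>_def by (rule Cauchy_Schwarz_ineq2)
  also have "\<dots> \<le> G * 1" using ng nh G by (intro mult_mono) auto
  finally have gb: "\<bar>\<gamma>\<bar> \<le> G" by simp
  have ig: "inner \<theta> g = x * \<gamma>"
  proof (cases "\<theta> = 0")
    case True thus ?thesis by (simp add: \<gamma>_def hat_def x_def)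
  next
    case False thus ?thesis by (simp add: \<gamma>_def hat_def x_def inner_commute)
  qed
  have n2: "(norm (\<theta> - g))\<^sup>2 \<le> x\<^sup>2 - 2 * x * \<gamma> + G\<^sup>2"
  proof -
    have "(norm (\<theta> - g))\<^sup>2 = x\<^sup>2 - 2 * inner \<theta> g + (norm g)\<^sup>2"
      by (simp add: x_def power2_norm_eq_inner inner_diff inner_commute)
    moreover have "(norm g)\<^sup>2 \<le> G\<^sup>2" using ng by (simp add: power_mono)
    ultimately show ?thesis using ig by simp
  qed
  define l where "l = (G + \<gamma>) / (2 * G)"
  have l: "0 \<le> l" "l \<le> 1" using gb G by (auto simp: l_def field_simps)
  have comb: "(x\<^sup>2 - 2 * x * \<gamma> + G\<^sup>2) / D = (1 - l) * A + l * B"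
    using G D by (simp add: l_def A_def B_def field_simps power2_eq_square)
  have "exp ((norm (\<theta> - g))\<^sup>2 / D) \<le> exp ((x\<^sup>2 - 2 * x * \<gamma> + G\<^sup>2) / D)"
    using n2 D by (simp add: divide_right_mono)
  also have "\<dots> = exp ((1 - l) *\<^sub>R A + l *\<^sub>R B)" using comb by simp
  also have "\<dots> \<le> (1 - l) * exp A + l * exp B"
    using l by (intro convex_onD[OF exp_convex]) auto
  finally have e: "K * exp ((norm (\<theta> - g))\<^sup>2 / D) \<le> K * ((1 - l) * exp A + l * exp B)"
    using K by simp
  have "inner g (((K * exp A - K * exp B) / (2*G)) *\<^sub>R hat \<theta>) = (K * exp A - K * exp B) / (2*G) * \<gamma>"
    by (simp add: \<gamma>_def)
  moreover have "(K * exp A - K * exp B) / (2*G) * \<gamma> + K * ((1 - l) * exp A + l * exp B)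
      = (K * exp A + K * exp B) / 2"
    using G by (simp add: l_def field_simps)
  ultimately show ?thesis using e unfolding A_def B_def x_def by linarith
qed



lemma step_1d:
  fixes D G x :: real
  assumes D: "D > 0" and G: "G > 0" and x: "x \<ge> 0"
  shows "(exp ((x + G)\<^sup>2 / (D + pi * G\<^sup>2)) + exp ((x - G)\<^sup>2 / (D + pi * G\<^sup>2))) / 2
     \<le> sqrt ((D + pi * G\<^sup>2) / D) * exp (x\<^sup>2 / D)"
proof -
  define D' where "D' = D + pi * G\<^sup>2"
  have pg: "pi * G\<^sup>2 > 0" using G by simp
  have D': "D' > 0" "D' \<ge> D" using D pg by (auto simp: D'_def)
  define h where "h = 4 * x * G / D'"
  have h0: "h \<ge> 0" using x G D' by (simp add: h_def)
  define B where "B = (x - G)\<^sup>2 / D'"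
  have AB: "(x + G)\<^sup>2 / D' = B + h" using D' by (simp add: B_def h_def field_simps power2_eq_square)
  have hl: "- h * (1/2) + ln (1 + (1/2) * (exp h - 1)) \<le> h\<^sup>2 / 8"
    by (rule Hoeffdings_lemma_aux) (use h0 in auto)
  have q: "1 + (1/2) * (exp h - 1) = (1 + exp h)/2" by (simp add: field_simps)
  have pos: "1 + (1/2) * (exp h - 1) > 0" unfolding q by (intro divide_pos_pos add_pos_pos) auto
  have "(1 + exp h) / 2 = exp (ln (1 + (1/2) * (exp h - 1)))" using pos unfolding q by simp
  also have "\<dots> \<le> exp (h / 2 + h\<^sup>2 / 8)" using hl by simp
  finally have c: "(1 + exp h) / 2 \<le> exp (h / 2 + h\<^sup>2 / 8)" .
  have "(exp ((x + G)\<^sup>2 / D') + exp ((x - G)\<^sup>2 / D')) / 2 = exp B * ((1 + exp h) / 2)"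
    unfolding AB B_def by (simp add: exp_add field_simps)
  also have "\<dots> \<le> exp B * exp (h / 2 + h\<^sup>2 / 8)" using c by simp
  also have "\<dots> = exp ((x\<^sup>2 + G\<^sup>2) / D' + 2 * x\<^sup>2 * G\<^sup>2 / D'\<^sup>2)"
  proof -
    have "B + (h / 2 + h\<^sup>2 / 8) = (x\<^sup>2 + G\<^sup>2) / D' + 2 * x\<^sup>2 * G\<^sup>2 / D'\<^sup>2"
      using D' by (simp add: B_def h_def field_simps power2_eq_square)
    thus ?thesis by (simp add: exp_add[symmetric])
  qed
  also have "\<dots> \<le> exp (x\<^sup>2 / D + ln (D' / D) / 2)"
  proof -
    have a: "x\<^sup>2 / D' + 2 * x\<^sup>2 * G\<^sup>2 / D'\<^sup>2 \<le> x\<^sup>2 / D"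
    proof -
      have dd: "D' - D = pi * G\<^sup>2" by (simp add: D'_def)
      have h1: "x\<^sup>2 / D - x\<^sup>2 / D' = x\<^sup>2 * (D' - D) / (D * D')"
        using D D' by (simp add: field_simps)
      have h2: "x\<^sup>2 * (pi * G\<^sup>2) / (D * D') - 2 * x\<^sup>2 * G\<^sup>2 / D'\<^sup>2 = x\<^sup>2 * G\<^sup>2 * (pi * D' - 2 * D) / (D * D'\<^sup>2)"
        using D D' by (simp add: field_simps power2_eq_square)
      have "x\<^sup>2 / D - (x\<^sup>2 / D' + 2 * x\<^sup>2 * G\<^sup>2 / D'\<^sup>2) = x\<^sup>2 * G\<^sup>2 * (pi * D' - 2 * D) / (D * D'\<^sup>2)"
        using h1 h2 unfolding dd by linarith
      moreover have "pi * D' - 2 * D \<ge> 0"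
      proof -
        have "pi * D' \<ge> 3 * D'" using D' pi_gt3 by (intro mult_right_mono) auto
        thus ?thesis using D' D by linarith
      qed
      moreover have "x\<^sup>2 * G\<^sup>2 * (pi * D' - 2 * D) / (D * D'\<^sup>2) \<ge> 0" if "pi * D' - 2 * D \<ge> 0"
        using D D' that by (intro divide_nonneg_pos mult_nonneg_nonneg) auto
      ultimately show ?thesis by linarith
    qed
    have b: "G\<^sup>2 / D' \<le> ln (D' / D) / 2"
    proof -
      have "ln (D / D') \<le> D / D' - 1" using D D' by (intro ln_le_minus_one) auto
      moreover have "D / D' - 1 = - (pi * G\<^sup>2 / D')" using D' by (simp add: D'_def field_simps)
      moreover have "ln (D' / D) = - ln (D / D')" using D D' by (simp add: ln_div)
      moreover have "2 * (G\<^sup>2 / D') \<le> pi * G\<^sup>2 / D'"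
      proof -
        have "2 * G\<^sup>2 \<le> pi * G\<^sup>2" using pi_gt3 by (intro mult_right_mono) auto
        hence "2 * G\<^sup>2 / D' \<le> pi * G\<^sup>2 / D'" using D' by (intro divide_right_mono) auto
        thus ?thesis by simp
      qed
      ultimately show ?thesis by linarith
    qed
    have "(x\<^sup>2 + G\<^sup>2) / D' = x\<^sup>2 / D' + G\<^sup>2 / D'" by (simp add: add_divide_distrib)
    with a b show ?thesis by simp
  qed
  also have "\<dots> = sqrt (D' / D) * exp (x\<^sup>2 / D)"
  proof -
    have "exp (ln (D' / D) / 2) = sqrt (D' / D)"
      using D D' by (simp add: powr_half_sqrt[symmetric] powr_def)
    thus ?thesis by (simp add: exp_add)
  qed
  finally show ?thesis unfolding D'_def .
qed

lemma aux_eq: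
  fixes e A B s G :: real
  shows "e * (A - B) / (2 * G * s) = (e * A / s - e * B / s) / (2 * G)"
  by (cases "s = 0"; cases "G = 0") (simp_all add: field_simps)

theorem theorem11:
  fixes g :: "nat \<Rightarrow> 'a::{real_inner, complete_space}" and u :: 'a
    and T :: nat and G eps a :: real
  assumes "T \<ge> 1" and "G > 0" and "eps > 0" and "a > G\<^sup>2 * pi / 2"
    and "\<And>t. t \<in> {1..T} \<Longrightarrow> norm (g t) \<le> G"
  shows "regret T (\<lambda>t. kt_play eps G a T g (t - 1)) g u
    \<le> norm u * sqrt (2 * a * real T * ln (sqrt (a * real T) * norm u / eps + 1))
       + eps * ((1 - pi * G\<^sup>2 / (2 * a)) powr (-1/2) - 1)"
proof -
  note T = assms(1) and G = assms(2) and ep = assms(3) and aG = assms(4) and gb = assms(5)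
  have pg: "pi * G\<^sup>2 > 0" using G by simp
  have "G\<^sup>2 * pi / 2 > 0" using pg by (simp add: mult.commute)
  hence a0: "a > 0" using aG by linarith
  have T0: "real T > 0" using T by simp
  define Dn where "Dn n = 2 * a * real T - pi * G\<^sup>2 * (real T - real n)" for n :: nat
  define q where "q n = 1 - pi * G\<^sup>2 * (real T - real n) / (2 * a * real T)" for n :: nat
  define \<Phi> where "\<Phi> n r = eps * exp (r\<^sup>2 / Dn n) / sqrt (q n)" for n :: nat and r :: real
  define w where "w t = kt_play eps G a T g (t - 1)" for t
  have aT: "2 * a * real T > 0" using a0 T0 by simp
  have qD: "q n = Dn n / (2 * a * real T)" for n
    unfolding q_def Dn_def using aT a0 T0 by (simp add: diff_divide_distrib)
  have Dpos: "Dn n > 0" if "n \<le> T" for n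
  proof -
    have "pi * G\<^sup>2 * (real T - real n) \<le> pi * G\<^sup>2 * real T"
      using pg by (intro mult_left_mono) auto
    moreover have "pi * G\<^sup>2 * real T < 2 * a * real T"
      using aG T0 by (intro mult_strict_right_mono) (auto simp: mult.commute)
    ultimately show ?thesis unfolding Dn_def by linarith
  qed
  have qpos: "q n > 0" if "n \<le> T" for n using Dpos[OF that] aT by (simp add: qD)
  have DSuc: "Dn (Suc n) = Dn n + pi * G\<^sup>2" for n by (simp add: Dn_def algebra_simps)
  have thSuc: "theta g (Suc n) = theta g n - g (Suc n)" for n
    by (simp add: theta_def)
  have th0: "theta g 0 = 0" by (simp add: theta_def)
  have wdef: "w (Suc n) = ((\<Phi> (Suc n) (norm (theta g n) + G) - \<Phi> (Suc n) (norm (theta g n) - G)) / (2 * G))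
      *\<^sub>R hat (theta g n)" for n
  proof -
    have e1: "2 * a * real T - pi * G\<^sup>2 * (real T - real n - 1) = Dn (Suc n)" by (simp add: Dn_def)
    have e2: "1 - pi * G\<^sup>2 * (real T - real n - 1) / (2 * a * real T) = q (Suc n)" by (simp add: q_def)
    have "w (Suc n) = kt_play eps G a T g n" by (simp add: w_def)
    also have "\<dots> = (eps * (exp ((norm (theta g n) + G)\<^sup>2 / Dn (Suc n)) - exp ((norm (theta g n) - G)\<^sup>2 / Dn (Suc n)))
         / (2 * G * sqrt (q (Suc n)))) *\<^sub>R hat (theta g n)"
      unfolding kt_play_def Let_def e1 e2 ..
    also have "\<dots> = ((\<Phi> (Suc n) (norm (theta g n) + G) - \<Phi> (Suc n) (norm (theta g n) - G)) / (2 * G))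
      *\<^sub>R hat (theta g n)" unfolding \<Phi>_def by (simp only: aux_eq)
    finally show ?thesis .

  qed
  have step: "inner (g (Suc n)) (w (Suc n)) + \<Phi> (Suc n) (norm (theta g (Suc n))) \<le> \<Phi> n (norm (theta g n))"
    if n: "n < T" for n
  proof -
    define K where "K = eps / sqrt (q (Suc n))"
    have K: "K > 0" using qpos[of "Suc n"] n ep by (simp add: K_def)
    have PhiK: "\<Phi> (Suc n) r = K * exp (r\<^sup>2 / Dn (Suc n))" for r by (simp add: \<Phi>_def K_def)
    define x where "x = norm (theta g n)"
    have "inner (g (Suc n)) (w (Suc n)) + \<Phi> (Suc n) (norm (theta g (Suc n)))
       \<le> (K * exp ((x + G)\<^sup>2 / Dn (Suc n)) + K * exp ((x - G)\<^sup>2 / Dn (Suc n))) / 2"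
      unfolding wdef thSuc PhiK x_def
      by (rule step_hilbert) (use K Dpos[of "Suc n"] n G gb[of "Suc n"] in auto)
    also have "\<dots> = K * ((exp ((x + G)\<^sup>2 / (Dn n + pi * G\<^sup>2)) + exp ((x - G)\<^sup>2 / (Dn n + pi * G\<^sup>2))) / 2)"
      by (simp add: DSuc field_simps)
    also have "\<dots> \<le> K * (sqrt ((Dn n + pi * G\<^sup>2) / Dn n) * exp (x\<^sup>2 / Dn n))"
      using K by (intro mult_left_mono step_1d) (use Dpos[of n] n G in \<open>auto simp: x_def\<close>)
    also have "\<dots> = \<Phi> n x"
    proof -
      have "sqrt ((Dn n + pi * G\<^sup>2) / Dn n) = sqrt (q (Suc n)) / sqrt (q n)"
        using aT a0 T0 by (simp add: qD DSuc real_sqrt_divide[symmetric])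
      thus ?thesis using qpos[of "Suc n"] n by (simp add: K_def \<Phi>_def)
    qed
    finally show ?thesis by (simp add: x_def)
  qed
  have inv: "(\<Sum>t=1..n. inner (g t) (w t)) \<le> \<Phi> 0 0 - \<Phi> n (norm (theta g n))" if "n \<le> T" for n
    using that
  proof (induction n)
    case 0 thus ?case by (simp add: th0)
  next
    case (Suc n)
    have "(\<Sum>t=1..Suc n. inner (g t) (w t)) = (\<Sum>t=1..n. inner (g t) (w t)) + inner (g (Suc n)) (w (Suc n))"
      by simp
    with Suc.IH[of] Suc.prems step[of n] show ?case by simp
  qed
  have rT: "regret T w g u = (\<Sum>t=1..T. inner (g t) (w t)) + inner (theta g T) u"
    unfolding regret_def theta_def
    by (simp add: inner_diff_right sum_subtractf inner_sum_left)
  have qT: "q T = 1" "Dn T = 2 * a * real T" by (simp_all add: q_def Dn_def)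
  have PhiT: "\<Phi> T r = eps * exp (r\<^sup>2 / (2 * (a * real T)))" for r
    by (simp add: \<Phi>_def qT mult.assoc)
  have q0: "q 0 = 1 - pi * G\<^sup>2 / (2 * a)" unfolding q_def using T0 by (simp add: field_simps)
  have Phi0: "\<Phi> 0 0 = eps * (1 - pi * G\<^sup>2 / (2 * a)) powr (-1/2)"
  proof -
    have "(1 - pi * G\<^sup>2 / (2 * a)) powr (-1/2) = inverse (sqrt (q 0))"
      using qpos[of 0] unfolding q0 by (simp add: powr_minus[symmetric] powr_half_sqrt[symmetric])
    moreover have "\<Phi> 0 0 = eps / sqrt (q 0)" by (simp add: \<Phi>_def)
    ultimately show ?thesis by (simp only: divide_inverse)
  qed
  have cs: "inner (theta g T) u \<le> norm (theta g T) * norm u" by (rule norm_cauchy_schwarz)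
  have cb: "norm (theta g T) * norm u - eps * exp ((norm (theta g T))\<^sup>2 / (2 * (a * real T)))
      \<le> norm u * sqrt (2 * (a * real T) * ln (sqrt (a * real T) * norm u / eps + 1)) - eps"
    by (rule conj_bound) (use a0 T0 ep in auto)
  have "regret T w g u \<le> \<Phi> 0 0 - \<Phi> T (norm (theta g T)) + norm (theta g T) * norm u"
    using rT inv[of T] cs by simp
  also have "\<dots> \<le> \<Phi> 0 0 + norm u * sqrt (2 * (a * real T) * ln (sqrt (a * real T) * norm u / eps + 1)) - eps"
    using cb unfolding PhiT by simp
  finally show ?thesis unfolding w_def Phi0 by (simp add: algebra_simps)
qed

end
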